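(* Let $n\ge1$ and $s\ge1$ be integers, $\delta>0$, and $p_t\in[0,1)$. Let $\ell=\frac{6(2+\delta)^2}{\delta^2}\cdot\frac{\log(\sqrt{2}\,n)}{1-p_t}$ and suppose $\ell\le s$. Let $A\in\{0,1\}^{s\times n}$ be a random matrix whose entries are independent with $\Pr[A_{i,j}=1]=p_a=\ell/s$, and, independently of $A$, let $\mathcal{R}\subseteq[s]$ be a random set containing each $i\in[s]$ independently with probability $1-p_t$. Then with probability at least $1-\frac1n$ there exists a vector $\mathbf{b}\in\mathbb{R}^{|\mathcal{R}|}$ with non-negative entries such that $\mathbf{b}^TA_{\mathcal{R}}=(a_1,\ldots,a_n)$ with $1\le a_j\le1+\delta$ for all $j\in[n]$, where $A_{\mathcal{R}}$ is the submatrix of $A$ consisting of the rows indexed by $\mathcal{R}$.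
   Context: Random straggler model: each of the $s$ compute nodes independently fails to respond (is a straggler) with probability $p_t$; $\mathcal{R}$ is the set of non-stragglers. The conclusion is that the random assignment matrix $A$ satisfies the straggler-resilience property (existence of a non-negative recovery vector $\mathbf{b}$ with $\mathbf{b}^TA_{\mathcal{R}}$ having all entries in $[1,1+\delta]$) for the realized set $\mathcal{R}$ of non-stragglers. $\log$ denotes the natural logarithm. *)

theory Defs
  imports "HOL-Probability.Probability"
begin

text \<open>Random 0/1 assignment matrix: entries indexed by (i,j) with i < s, j < n,
  independent Bernoulli(pa); True encodes entry 1.\<close>
definition assign_pmf :: "nat \<Rightarrow> nat \<Rightarrow> real \<Rightarrow> (nat \<times> nat \<Rightarrow> bool) pmf" where
  "assign_pmf s n pa = Pi_pmf ({0..<s} \<times> {0..<n}) False (\<lambda>_. bernoulli_pmf pa)"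

definition nonstraggler_pmf :: "nat \<Rightarrow> real \<Rightarrow> nat set pmf" where
  "nonstraggler_pmf s q = map_pmf (\<lambda>r. {i. r i}) (Pi_pmf {0..<s} False (\<lambda>_. bernoulli_pmf q))"

definition resilient :: "nat \<Rightarrow> real \<Rightarrow> (nat \<times> nat \<Rightarrow> bool) \<Rightarrow> nat set \<Rightarrow> bool" where
  "resilient n \<delta> A R \<longleftrightarrow> (\<exists>b :: nat \<Rightarrow> real. (\<forall>i\<in>R. b i \<ge> 0) \<and>
     (\<forall>j<n. 1 \<le> (\<Sum>i\<in>R. b i * (if A (i, j) then 1 else 0)) \<and>
            (\<Sum>i\<in>R. b i * (if A (i, j) then 1 else 0)) \<le> 1 + \<delta>))"

end

theory Submission
  imports Defs
begin


lemma ln_lower_aux: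
  fixes x :: real assumes "x \<ge> 0"
  shows "2*x/(2+x) \<le> ln (1+x)"
proof -
  let ?f = "\<lambda>x::real. ln (1+x) - 2*x/(2+x)"
  have "?f 0 \<le> ?f x"
  proof (rule DERIV_nonneg_imp_nondecreasing[OF assms], intro exI conjI)
    fix y :: real assume y: "0 \<le> y" "y \<le> x"
    show "(?f has_real_derivative (1/(1+y) - (2*(2+y) - 2*y)/((2+y)*(2+y)))) (at y)"
      using y by (auto intro!: derivative_eq_intros simp: power2_eq_square)
    have a: "1+y > 0" "2+y > 0" using y by auto
    have "1/(1+y) - (2*(2+y) - 2*y)/((2+y)*(2+y)) = (y*y)/((1+y)*((2+y)*(2+y)))"
      using a by (simp add: divide_simps) (simp add: algebra_simps)
    also have "\<dots> \<ge> 0" using y by simp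
    finally show "0 \<le> 1/(1+y) - (2*(2+y) - 2*y)/((2+y)*(2+y))" .
  qed
  thus ?thesis by simp
qed

lemma upper_exponent:
  fixes e :: real assumes "0 \<le> e" "e \<le> 1"
  shows "e + e^2/3 \<le> (1+e) * ln (1+e)"
proof -
  have "(1+e) * (2*e/(2+e)) \<le> (1+e) * ln (1+e)"
    using ln_lower_aux[of e] assms by (intro mult_left_mono) auto
  moreover have "e*e*e \<le> e*e*1" using assms by (intro mult_left_mono) auto
  then have "e + e^2/3 \<le> (1+e) * (2*e/(2+e))"
    using assms by (simp add: field_simps power2_eq_square)
  ultimately show ?thesis by linarith
qed

lemma lower_exponent:
  fixes e :: real assumes "0 \<le> e" "e < 1"
  shows "-e + e^2/2 \<le> (1-e) * ln (1-e)"
proof -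
  let ?f = "\<lambda>x::real. (1-x) * ln (1-x) + x - x*x/2"
  have "?f 0 \<le> ?f e"
  proof (rule DERIV_nonneg_imp_nondecreasing[OF assms(1)], intro exI conjI)
    fix y :: real assume y: "0 \<le> y" "y \<le> e"
    have y1: "y < 1" using y assms by simp
    have "(?f has_real_derivative (-1 * ln (1-y) + (1-y) * (-1/(1-y)) + 1 - (1*y + y*1)/2)) (at y)"
      using y1 by (auto intro!: derivative_eq_intros)
    moreover have "-1 * ln (1-y) + (1-y) * (-1/(1-y)) + 1 - (1*y + y*1)/2 = -ln (1-y) - y"
      using y1 by simp
    ultimately show "(?f has_real_derivative (-ln (1-y) - y)) (at y)" by simp
    have "ln (1-y) \<le> (1-y) - 1" using y1 by (intro ln_le_minus_one) auto
    thus "0 \<le> -ln (1-y) - y" by simp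
  qed
  thus ?thesis by (simp add: power2_eq_square)
qed



lemma binom_mgf:
  fixes p t :: real assumes "0 \<le> p" "p \<le> 1"
  shows "(\<Sum>k\<le>s. pmf (binomial_pmf s p) k * exp (t * real k)) = (p * exp t + (1-p))^s"
proof -
  have "(p * exp t + (1-p))^s = (\<Sum>k\<le>s. real (s choose k) * (p * exp t)^k * (1-p)^(s-k))"
    by (rule binomial_ring)
  also have "\<dots> = (\<Sum>k\<le>s. pmf (binomial_pmf s p) k * exp (t * real k))"
    using assms by (intro sum.cong refl)
      (simp add: power_mult_distrib exp_of_nat_mult[symmetric] mult.commute mult.left_commute)
  finally show ?thesis ..
qed

lemma binom_mgf_bound:
  fixes p t :: real assumes "0 \<le> p" "p \<le> 1"
  shows "(p * exp t + (1-p))^s \<le> exp (real s * p * (exp t - 1))"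
proof -
  have "(p * exp t + (1-p))^s = (1 + p * (exp t - 1))^s" by (simp add: algebra_simps)
  also have "\<dots> \<le> (exp (p * (exp t - 1)))^s"
  proof (rule power_mono)
    show "1 + p * (exp t - 1) \<le> exp (p * (exp t - 1))" by (rule exp_ge_add_one_self)
    have "0 \<le> p * exp t + (1 - p)" using assms by simp
    thus "0 \<le> 1 + p * (exp t - 1)" by (simp add: algebra_simps)
  qed
  also have "\<dots> = exp (real s * p * (exp t - 1))"
    by (simp add: exp_of_nat_mult[symmetric] mult.assoc)
  finally show ?thesis .
qed

lemma binom_tail:
  fixes p t c :: real assumes "0 \<le> p" "p \<le> 1" "c > 0" "\<And>k. k \<in> S \<Longrightarrow> c \<le> exp (t * real k)"
  shows "measure_pmf.prob (binomial_pmf s p) S \<le> exp (real s * p * (exp t - 1)) / c"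
proof -
  let ?B = "binomial_pmf s p"
  have sub: "set_pmf ?B \<subseteq> {..s}" using assms by (auto simp: set_pmf_binomial_eq)
  have "measure_pmf.prob ?B S = measure_pmf.prob ?B (S \<inter> set_pmf ?B)"
    by (simp add: measure_Int_set_pmf)
  also have "\<dots> \<le> measure_pmf.prob ?B (S \<inter> {..s})"
    using sub by (intro measure_pmf.finite_measure_mono) auto
  also have "\<dots> = (\<Sum>k\<in>S \<inter> {..s}. pmf ?B k)"
    by (rule measure_measure_pmf_finite) auto
  also have "\<dots> \<le> (\<Sum>k\<in>S \<inter> {..s}. pmf ?B k * exp (t * real k) / c)"
  proof (rule sum_mono)
    fix k assume "k \<in> S \<inter> {..s}"
    hence "c \<le> exp (t * real k)" using assms by auto
    hence "1 \<le> exp (t * real k) / c" using assms by simp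
    thus "pmf ?B k \<le> pmf ?B k * exp (t * real k) / c"
      using mult_left_mono[of 1 "exp (t * real k) / c" "pmf ?B k"] by simp
  qed
  also have "\<dots> \<le> (\<Sum>k\<le>s. pmf ?B k * exp (t * real k) / c)"
    by (intro sum_mono2) (use assms in auto)
  also have "\<dots> = (\<Sum>k\<le>s. pmf ?B k * exp (t * real k)) / c"
    by (simp add: sum_divide_distrib)
  also have "\<dots> = (p * exp t + (1-p))^s / c" using binom_mgf assms by simp
  also have "\<dots> \<le> exp (real s * p * (exp t - 1)) / c"
    using binom_mgf_bound[OF assms(1,2)] assms(3) by (simp add: divide_right_mono)
  finally show ?thesis .
qed

lemma binom_upper:
  fixes p e :: real assumes "0 \<le> p" "p \<le> 1" "0 \<le> e" "e \<le> 1"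
  shows "measure_pmf.prob (binomial_pmf s p) {k. real k > (1+e) * (real s * p)} \<le> exp (-(e^2 * (real s * p) / 3))"
proof -
  define \<mu> where "\<mu> = real s * p"
  have mu: "\<mu> \<ge> 0" using assms by (simp add: \<mu>_def)
  define t where "t = ln (1+e)"
  have t: "t \<ge> 0" "exp t = 1 + e" using assms by (auto simp: t_def)
  have "measure_pmf.prob (binomial_pmf s p) {k. real k > (1+e) * \<mu>} \<le> exp (real s * p * (exp t - 1)) / exp (t * ((1+e) * \<mu>))"
    by (rule binom_tail) (use assms t in \<open>auto intro: mult_left_mono\<close>)
  also have "\<dots> = exp (\<mu> * (e - (1+e) * ln (1+e)))"
    using t by (simp add: \<mu>_def exp_diff[symmetric] t_def algebra_simps)
  also have "\<dots> \<le> exp (-(e^2 * \<mu> / 3))"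
    using upper_exponent[OF assms(3,4)] mu mult_left_mono[of "e + e^2/3" "(1+e) * ln (1+e)" \<mu>]
    by (simp add: algebra_simps)
  finally show ?thesis by (simp add: \<mu>_def)
qed

lemma binom_lower:
  fixes p e :: real assumes "0 \<le> p" "p \<le> 1" "0 \<le> e" "e < 1"
  shows "measure_pmf.prob (binomial_pmf s p) {k. real k < (1-e) * (real s * p)} \<le> exp (-(e^2 * (real s * p) / 2))"
proof -
  define \<mu> where "\<mu> = real s * p"
  have mu: "\<mu> \<ge> 0" using assms by (simp add: \<mu>_def)
  define t where "t = ln (1-e)"
  have t: "t \<le> 0" "exp t = 1 - e" using assms by (auto simp: t_def)
  have "measure_pmf.prob (binomial_pmf s p) {k. real k < (1-e) * \<mu>} \<le> exp (real s * p * (exp t - 1)) / exp (t * ((1-e) * \<mu>))"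
    by (rule binom_tail) (use assms t in \<open>auto intro: mult_left_mono_neg\<close>)
  also have "\<dots> = exp (\<mu> * (-e - (1-e) * t))"
    by (simp add: \<mu>_def exp_diff[symmetric] t(2) algebra_simps)
  also have "\<dots> = exp (\<mu> * (-e - (1-e) * ln (1-e)))"
    by (simp add: t_def)
  also have "\<dots> \<le> exp (-(e^2 * \<mu> / 2))"
    using lower_exponent[OF assms(3,4)] mu mult_left_mono[of "-e + e^2/2" "(1-e) * ln (1-e)" \<mu>]
    by (simp add: algebra_simps)
  finally show ?thesis by (simp add: \<mu>_def)
qed



lemma bern_and:
  fixes p q :: real assumes "0 \<le> p" "p \<le> 1" "0 \<le> q" "q \<le> 1"
  shows "bind_pmf (bernoulli_pmf p) (\<lambda>a. bind_pmf (bernoulli_pmf q) (\<lambda>b. return_pmf (a \<and> b))) = bernoulli_pmf (p*q)"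
proof (rule pmf_eqI)
  fix x :: bool
  have pq: "p*q \<le> 1" using assms mult_le_one by blast
  show "pmf (bind_pmf (bernoulli_pmf p) (\<lambda>a. bind_pmf (bernoulli_pmf q) (\<lambda>b. return_pmf (a \<and> b)))) x = pmf (bernoulli_pmf (p*q)) x"
    using assms pq by (cases x) (simp_all add: pmf_bind algebra_simps measure_pmf_single)
qed

lemma Pi_and:
  fixes p q :: real assumes "0 \<le> p" "p \<le> 1" "0 \<le> q" "q \<le> 1" and fin: "finite A"
  shows "map_pmf (\<lambda>(f,g) i. f i \<and> g i) (pair_pmf (Pi_pmf A False (\<lambda>_. bernoulli_pmf p)) (Pi_pmf A False (\<lambda>_. bernoulli_pmf q)))
     = Pi_pmf A False (\<lambda>_. bernoulli_pmf (p*q))"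
  using fin
proof (induction A rule: finite_induct)
  case empty
  show ?case by simp
next
  case (insert x A)
  let ?P = "Pi_pmf A False (\<lambda>_. bernoulli_pmf p)"
  let ?Q = "Pi_pmf A False (\<lambda>_. bernoulli_pmf q)"
  have "Pi_pmf (insert x A) False (\<lambda>_. bernoulli_pmf (p*q)) =
     map_pmf (\<lambda>(y,f). f(x:=y)) (pair_pmf (bernoulli_pmf (p*q)) (Pi_pmf A False (\<lambda>_. bernoulli_pmf (p*q))))"
    using insert by (simp add: Pi_pmf_insert)
  also have "\<dots> = map_pmf (\<lambda>(y,f). f(x:=y)) (pair_pmf
       (bind_pmf (bernoulli_pmf p) (\<lambda>a. bind_pmf (bernoulli_pmf q) (\<lambda>b. return_pmf (a \<and> b))))
       (map_pmf (\<lambda>(f,g) i. f i \<and> g i) (pair_pmf ?P ?Q)))"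
    using insert assms by (simp add: bern_and)
  also have "\<dots> = bind_pmf (bernoulli_pmf p) (\<lambda>a. bind_pmf (bernoulli_pmf q) (\<lambda>b. bind_pmf ?P (\<lambda>f. bind_pmf ?Q (\<lambda>g.
        return_pmf ((\<lambda>i. f i \<and> g i)(x := (a \<and> b)))))))"
    by (simp add: map_pmf_def pair_pmf_def bind_assoc_pmf bind_return_pmf)
  also have "\<dots> = bind_pmf (bernoulli_pmf p) (\<lambda>a. bind_pmf ?P (\<lambda>f. bind_pmf (bernoulli_pmf q) (\<lambda>b. bind_pmf ?Q (\<lambda>g.
        return_pmf ((\<lambda>i. f i \<and> g i)(x := (a \<and> b)))))))"
    by (subst bind_commute_pmf[of "bernoulli_pmf q" ?P]) (rule refl)
  also have "\<dots> = bind_pmf (bernoulli_pmf p) (\<lambda>a. bind_pmf ?P (\<lambda>f. bind_pmf (bernoulli_pmf q) (\<lambda>b. bind_pmf ?Q (\<lambda>g.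
        return_pmf (\<lambda>i. (f(x:=a)) i \<and> (g(x:=b)) i)))))"
    by (intro bind_pmf_cong refl arg_cong[of _ _ return_pmf]) auto
  also have "\<dots> = map_pmf (\<lambda>(f,g) i. f i \<and> g i) (pair_pmf (Pi_pmf (insert x A) False (\<lambda>_. bernoulli_pmf p)) (Pi_pmf (insert x A) False (\<lambda>_. bernoulli_pmf q)))"
    using insert by (simp add: Pi_pmf_insert map_pmf_def pair_pmf_def bind_assoc_pmf bind_return_pmf)
  finally show ?case ..
qed



lemma col_dist:
  assumes "j < n"
  shows "map_pmf (\<lambda>A i. A (i,j)) (assign_pmf s n pa) = Pi_pmf {0..<s} False (\<lambda>_. bernoulli_pmf pa)"
proof -
  let ?B = "{0..<s} \<times> {j}"
  let ?h = "\<lambda>i::nat. (i, j)"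
  have bij: "bij_betw ?h {0..<s} ?B" by (auto simp: bij_betw_def inj_on_def)
  have "Pi_pmf {0..<s} False (\<lambda>_. bernoulli_pmf pa) = map_pmf (\<lambda>g. g \<circ> ?h) (Pi_pmf ?B False (\<lambda>_. bernoulli_pmf pa))"
    by (rule Pi_pmf_bij_betw[OF _ bij]) auto
  also have "Pi_pmf ?B False (\<lambda>_. bernoulli_pmf pa) =
      map_pmf (\<lambda>f x. if x \<in> ?B then f x else False) (Pi_pmf ({0..<s} \<times> {0..<n}) False (\<lambda>_. bernoulli_pmf pa))"
    using assms by (intro Pi_pmf_subset) auto
  also have "map_pmf (\<lambda>g. g \<circ> ?h) \<dots> = map_pmf (\<lambda>A i. A (i,j)) (assign_pmf s n pa)"
    unfolding assign_pmf_def pmf.map_comp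
  proof (intro map_pmf_cong refl)
    fix f assume f: "f \<in> set_pmf (Pi_pmf ({0..<s} \<times> {0..<n}) False (\<lambda>_. bernoulli_pmf pa))"
    have "f (a,b) = False" if "\<not> (a < s \<and> b < n)" for a b
      using set_Pi_pmf_subset[of "{0..<s} \<times> {0..<n}" False "\<lambda>_. bernoulli_pmf pa"] f that by auto
    thus "((\<lambda>g. g \<circ> ?h) \<circ> (\<lambda>f x. if x \<in> ?B then f x else False)) f = (\<lambda>A i. A (i, j)) f"
      using assms by (auto simp: fun_eq_iff)
  qed
  finally show ?thesis ..
qed

lemma X_dist:
  fixes pa q :: real
  assumes "j < n" "0 \<le> pa" "pa \<le> 1" "0 \<le> q" "q \<le> 1"
  shows "map_pmf (\<lambda>(A,R). card {i\<in>{0..<s}. A (i,j) \<and> i \<in> R}) (pair_pmf (assign_pmf s n pa) (nonstraggler_pmf s q))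
     = binomial_pmf s (pa*q)"
proof -
  have pq: "pa * q \<in> {0..1}" using assms mult_le_one by auto
  have "map_pmf (\<lambda>(A,R). card {i\<in>{0..<s}. A (i,j) \<and> i \<in> R}) (pair_pmf (assign_pmf s n pa) (nonstraggler_pmf s q))
     = map_pmf (\<lambda>h. card {i\<in>{0..<s}. h i}) (map_pmf (\<lambda>(f,g) i. f i \<and> g i)
         (map_pmf (\<lambda>(A,R). (\<lambda>i. A (i,j), \<lambda>i. i \<in> R)) (pair_pmf (assign_pmf s n pa) (nonstraggler_pmf s q))))"
    by (simp add: pmf.map_comp o_def case_prod_unfold)
  also have "map_pmf (\<lambda>(A,R). (\<lambda>i. A (i,j), \<lambda>i. i \<in> R)) (pair_pmf (assign_pmf s n pa) (nonstraggler_pmf s q))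
      = pair_pmf (map_pmf (\<lambda>A i. A (i,j)) (assign_pmf s n pa)) (map_pmf (\<lambda>R i. i \<in> R) (nonstraggler_pmf s q))"
    by (rule map_pair)
  also have "map_pmf (\<lambda>R i. i \<in> R) (nonstraggler_pmf s q) = Pi_pmf {0..<s} False (\<lambda>_. bernoulli_pmf q)"
    by (simp add: nonstraggler_pmf_def pmf.map_comp o_def)
  also have "map_pmf (\<lambda>A i. A (i,j)) (assign_pmf s n pa) = Pi_pmf {0..<s} False (\<lambda>_. bernoulli_pmf pa)"
    by (rule col_dist[OF assms(1)])
  also have "map_pmf (\<lambda>(f,g) i. f i \<and> g i) (pair_pmf (Pi_pmf {0..<s} False (\<lambda>_. bernoulli_pmf pa)) (Pi_pmf {0..<s} False (\<lambda>_. bernoulli_pmf q)))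
       = Pi_pmf {0..<s} False (\<lambda>_. bernoulli_pmf (pa*q))"
    using assms by (intro Pi_and) auto
  also have "map_pmf (\<lambda>h. card {i\<in>{0..<s}. h i}) \<dots> = binomial_pmf s (pa*q)"
    using pq by (intro binomial_pmf_altdef'[symmetric]) auto
  finally show ?thesis .
qed



theorem theorem5:
  fixes n s :: nat and \<delta> p_t l :: real
  assumes "n \<ge> 1" and "s \<ge> 1" and "\<delta> > 0" and "0 \<le> p_t" and "p_t < 1"
    and "l = 6 * (2 + \<delta>)^2 / \<delta>^2 * (ln (sqrt 2 * real n) / (1 - p_t))"
    and "l \<le> real s"
  shows "measure_pmf.prob (pair_pmf (assign_pmf s n (l / real s)) (nonstraggler_pmf s (1 - p_t)))
           {(A, R). resilient n \<delta> A R} \<ge> 1 - 1 / real n"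
proof -
  define q where "q = 1 - p_t"
  define pa where "pa = l / real s"
  define M where "M = pair_pmf (assign_pmf s n pa) (nonstraggler_pmf s q)"
  define \<epsilon> where "\<epsilon> = \<delta> / (2 + \<delta>)"
  define \<mu> where "\<mu> = real s * (pa * q)"
  define X where "X = (\<lambda>j. \<lambda>(A::nat\<times>nat\<Rightarrow>bool, R::nat set). card {i\<in>{0..<s}. A (i,j) \<and> i \<in> R})"
  define S where "S = {k::nat. real k < (1-\<epsilon>) * \<mu> \<or> real k > (1+\<epsilon>) * \<mu>}"
  define bad where "bad = (\<lambda>j. X j -` S)"
  define Z where "Z = {(A::nat\<times>nat\<Rightarrow>bool, R::nat set). \<not> R \<subseteq> {0..<s}}"
  define LN where "LN = ln (sqrt 2 * real n)"
  have q: "0 < q" "q \<le> 1" using assms by (auto simp: q_def)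
  have n1: "real n \<ge> 1" using assms by simp
  have "sqrt 2 * real n > 1"
  proof -
    have "sqrt 2 > 1" by simp
    moreover have "sqrt 2 * 1 \<le> sqrt 2 * real n" using n1 by (intro mult_left_mono) auto
    ultimately show ?thesis by linarith
  qed
  hence LN: "LN > 0" by (simp add: LN_def)
  have l: "l = 6 * (2 + \<delta>)^2 / \<delta>^2 * LN / q" using assms by (simp add: q_def LN_def)
  have lpos: "l > 0" unfolding l using LN q assms by simp
  have pa: "0 < pa" "pa \<le> 1" using lpos assms(2,7) by (auto simp: pa_def)
  have mu: "\<mu> = 6 * (2 + \<delta>)^2 / \<delta>^2 * LN"
    using assms q unfolding \<mu>_def pa_def l by (simp add: field_simps)
  have eps: "0 < \<epsilon>" "\<epsilon> < 1" using assms by (auto simp: \<epsilon>_def)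
  have key: "\<epsilon>^2 * \<mu> / 3 = 2 * LN"
  proof -
    have d: "\<delta> \<noteq> 0" "2 + \<delta> \<noteq> 0" using assms(3) by auto
    have "(\<delta> / (2+\<delta>))^2 * (6 * (2 + \<delta>)^2 / \<delta>^2) = 6"
      using d by (simp add: power_divide)
    then have "(\<delta> / (2+\<delta>))^2 * (6 * (2 + \<delta>)^2 / \<delta>^2 * LN) / 3 = 6 * LN / 3"
      by (metis mult.assoc)
    then show ?thesis unfolding mu \<epsilon>_def by simp
  qed
  have expkey: "exp (-(\<epsilon>^2 * \<mu> / 3)) = 1 / (2 * real n ^ 2)"
  proof -
    have "exp (-(\<epsilon>^2 * \<mu> / 3)) = exp (- (2 * LN))" by (simp add: key)
    also have "\<dots> = 1 / (exp LN)^2"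
      by (simp add: exp_minus power2_eq_square exp_add[symmetric] inverse_eq_divide)
    also have "exp LN = sqrt 2 * real n" unfolding LN_def using n1 by simp
    finally show ?thesis by (simp add: power_mult_distrib)
  qed
  have mu0: "\<mu> \<ge> 0" unfolding mu using LN assms by simp
  have bad_bound: "measure_pmf.prob M (bad j) \<le> 1 / real n ^ 2" if j: "j < n" for j
  proof -
    have "measure_pmf.prob M (bad j) = measure_pmf.prob (map_pmf (X j) M) S"
      by (simp add: bad_def)
    also have "map_pmf (X j) M = binomial_pmf s (pa * q)"
      unfolding M_def X_def using j pa q by (intro X_dist) auto
    also have "measure_pmf.prob (binomial_pmf s (pa * q)) S \<le>
        measure_pmf.prob (binomial_pmf s (pa * q)) {k. real k < (1-\<epsilon>) * \<mu>}
        + measure_pmf.prob (binomial_pmf s (pa * q)) {k. real k > (1+\<epsilon>) * \<mu>}"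
      unfolding S_def Collect_disj_eq by (rule measure_subadditive) (auto simp: measure_pmf.emeasure_eq_measure)
    also have "\<dots> \<le> exp (-(\<epsilon>^2 * \<mu> / 2)) + exp (-(\<epsilon>^2 * \<mu> / 3))"
    proof (rule add_mono)
      have pq: "0 \<le> pa * q" "pa * q \<le> 1" using pa q mult_le_one[of pa q] by auto
      show "measure_pmf.prob (binomial_pmf s (pa * q)) {k. real k < (1-\<epsilon>) * \<mu>} \<le> exp (-(\<epsilon>^2 * \<mu> / 2))"
        unfolding \<mu>_def using binom_lower[OF pq] eps by simp
      show "measure_pmf.prob (binomial_pmf s (pa * q)) {k. real k > (1+\<epsilon>) * \<mu>} \<le> exp (-(\<epsilon>^2 * \<mu> / 3))"
        unfolding \<mu>_def using binom_upper[OF pq] eps by simp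
    qed
    also have "exp (-(\<epsilon>^2 * \<mu> / 2)) \<le> exp (-(\<epsilon>^2 * \<mu> / 3))"
      using mu0 by (simp add: divide_left_mono)
    finally show ?thesis using expkey by simp
  qed
  have Z0: "measure_pmf.prob M Z = 0"
  proof -
    have "R \<subseteq> {0..<s}" if "R \<in> set_pmf (nonstraggler_pmf s q)" for R
    proof -
      from that have "R \<in> (\<lambda>r. {i. r i}) ` set_pmf (Pi_pmf {0..<s} False (\<lambda>_. bernoulli_pmf q))"
        by (simp add: nonstraggler_pmf_def)
      then obtain r where r: "r \<in> set_pmf (Pi_pmf {0..<s} False (\<lambda>_. bernoulli_pmf q))" and R: "R = {i. r i}"
        by blast
      have "\<forall>x. x \<notin> {0..<s} \<longrightarrow> r x = False"
        using set_Pi_pmf_subset[of "{0..<s}" False "\<lambda>_. bernoulli_pmf q"] r by blast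
      thus ?thesis unfolding R by auto
    qed
    hence "Z \<inter> set_pmf M = {}" by (auto simp: M_def Z_def)
    thus ?thesis by (metis measure_Int_set_pmf measure_empty)
  qed
  have cover: "UNIV - {(A, R). resilient n \<delta> A R} \<subseteq> Z \<union> (\<Union>j\<in>{..<n}. bad j)"
  proof
    fix AR assume "AR \<in> UNIV - {(A, R). resilient n \<delta> A R}"
    then obtain A R where AR: "AR = (A,R)" and nres: "\<not> resilient n \<delta> A R" by auto
    show "AR \<in> Z \<union> (\<Union>j\<in>{..<n}. bad j)"
    proof (rule ccontr)
      assume "AR \<notin> Z \<union> (\<Union>j\<in>{..<n}. bad j)"
      hence Rs: "R \<subseteq> {0..<s}" and good: "\<And>j. j < n \<Longrightarrow> X j (A,R) \<notin> S"
        unfolding AR Z_def bad_def by auto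
      define L where "L = (1-\<epsilon>) * \<mu>"
      have Lpos: "L > 0" unfolding L_def mu using eps LN assms by simp
      have "resilient n \<delta> A R"
        unfolding resilient_def
      proof (intro exI[of _ "\<lambda>_. 1 / L"] conjI ballI allI impI)
        fix j assume j: "j < n"
        have finR: "finite R" using Rs finite_subset by blast
        have "(\<Sum>i\<in>R. 1 / L * (if A (i, j) then 1 else 0)) = 1 / L * real (card {i\<in>R. A (i,j)})"
        proof -
          have "(\<Sum>i\<in>R. (if A (i, j) then 1 else 0)) = (\<Sum>i\<in>{i\<in>R. A (i,j)}. (1::real))"
            using finR sum.inter_filter[of R "\<lambda>_. (1::real)" "\<lambda>i. A (i,j)"] by simp
          thus ?thesis by (simp add: sum_divide_distrib[symmetric])
        qed
        also have "{i\<in>R. A (i,j)} = {i\<in>{0..<s}. A (i,j) \<and> i \<in> R}" using Rs by auto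
        finally have eq: "(\<Sum>i\<in>R. 1 / L * (if A (i, j) then 1 else 0)) = real (X j (A,R)) / L"
          by (simp add: X_def)
        have lo: "L \<le> real (X j (A,R))" and hi: "real (X j (A,R)) \<le> (1+\<epsilon>) * \<mu>"
          using good[OF j] by (auto simp: S_def L_def)
        have "(1+\<epsilon>) * \<mu> = (1+\<delta>) * L"
          unfolding L_def \<epsilon>_def using assms by (simp add: field_simps)
        show "1 \<le> (\<Sum>i\<in>R. 1 / L * (if A (i, j) then 1 else 0))"
          unfolding eq using lo Lpos by simp
        show "(\<Sum>i\<in>R. 1 / L * (if A (i, j) then 1 else 0)) \<le> 1 + \<delta>"
          unfolding eq using hi Lpos \<open>(1+\<epsilon>) * \<mu> = (1+\<delta>) * L\<close> by (simp add: divide_le_eq)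
      qed (use Lpos in simp)
      with nres show False by simp
    qed
  qed
  have "measure_pmf.prob M (UNIV - {(A, R). resilient n \<delta> A R}) \<le> measure_pmf.prob M (Z \<union> (\<Union>j\<in>{..<n}. bad j))"
    using cover by (intro measure_pmf.finite_measure_mono) auto
  also have "\<dots> \<le> measure_pmf.prob M Z + measure_pmf.prob M (\<Union>j\<in>{..<n}. bad j)"
    by (rule measure_subadditive) (auto simp: measure_pmf.emeasure_eq_measure)
  also have "measure_pmf.prob M (\<Union>j\<in>{..<n}. bad j) \<le> (\<Sum>j<n. measure_pmf.prob M (bad j))"
    by (rule measure_pmf.finite_measure_subadditive_finite) auto
  also have "\<dots> \<le> (\<Sum>j<n. 1 / real n ^ 2)"
    by (intro sum_mono bad_bound) auto
  also have "\<dots> = 1 / real n" using n1 by (simp add: power2_eq_square)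
  finally have "measure_pmf.prob M (UNIV - {(A, R). resilient n \<delta> A R}) \<le> 1 / real n"
    using Z0 by simp
  moreover have "measure_pmf.prob M (UNIV - {(A, R). resilient n \<delta> A R}) = 1 - measure_pmf.prob M {(A, R). resilient n \<delta> A R}"
    using measure_pmf.prob_compl[of "{(A, R). resilient n \<delta> A R}" M] by simp
  ultimately show ?thesis unfolding M_def pa_def q_def by simp
qed

end
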